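(* Let $X$ be a real Hilbert space, $r>0$, and let $Z\subset X$ be an $r$-prox-regular set. Assume there exist $R\ge 3$ and $\rho\in\left(0,\frac{2r}{1+R^2}\right)$ such that for every $x\in Z$ there exists $\bar x\in Z$ with $|x-\bar x|<R\rho$ and $B_{3\rho}(\bar x)\subset Z$. Then for every $x\in\partial Z$ there exists a unit vector $\xi\in X$ such that $$\langle \xi, x-z\rangle+\frac{1}{2r}|x-z|^2\ge 0\quad\text{for all } z\in Z.$$
   Context: $X$ is a real Hilbert space with scalar product $\langle\cdot,\cdot\rangle$ and norm $|\cdot|$; $\mathrm{dist}(x,Z)=\inf\{|x-z|:z\in Z\}$; $B_\delta(x)=\{y\in X:|y-x|\le\delta\}$ is the closed ball; $\partial Z$ is the boundary of $Z$. A closed connected set $Z\subset X$ is called $r$-prox-regular ($r>0$) if for every $y\in X$ with $\mathrm{dist}(y,Z)=d\in(0,r)$ there exists $x\in Z$ such that $\mathrm{dist}\left(x+\frac{r}{d}(y-x),Z\right)=\frac{r}{d}|y-x|=r$. *)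

theory Defs
  imports "HOL-Analysis.Analysis"
begin

definition prox_regular :: "real \<Rightarrow> 'a::real_inner set \<Rightarrow> bool" where
  "prox_regular r Z \<longleftrightarrow> closed Z \<and> connected Z \<and>
     (\<forall>y. 0 < infdist y Z \<and> infdist y Z < r \<longrightarrow>
        (\<exists>x\<in>Z. infdist (x + (r / infdist y Z) *\<^sub>R (y - x)) Z = (r / infdist y Z) * norm (y - x)
              \<and> (r / infdist y Z) * norm (y - x) = r))"

end

theory Submission
  imports Defs
begin

lemma infdist_geI:
  assumes "A \<noteq> {}" "\<And>a. a \<in> A \<Longrightarrow> d \<le> dist x a"
  shows "d \<le> infdist x A"
  using assms by (simp add: infdist_notempty cINF_greatest)

lemma norm_sq_add: "(norm (a + b))\<^sup>2 = (norm a)\<^sup>2 + 2 * inner a b + (norm (b::'a::real_inner))\<^sup>2"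
  by (simp add: power2_norm_eq_inner inner_add_left inner_add_right inner_commute)

lemma key:
  fixes Z :: "'a::real_inner set"
  assumes r: "r > 0" and pr: "prox_regular r Z" and xZ: "x \<in> Z"
    and q0: "q \<noteq> 0" and q1: "norm q \<le> 1"
    and ineq: "\<forall>z\<in>Z. 2 * r * inner q (x - z) + (norm (x - z))\<^sup>2 \<ge> 0"
  shows "\<exists>\<xi>. norm \<xi> = 1 \<and> (\<forall>z\<in>Z. inner \<xi> (x - z) + (1 / (2 * r)) * (norm (x - z))\<^sup>2 \<ge> 0)"
proof -
  define v where "v = (1 / norm q) *\<^sub>R q"
  define T where "T = r * norm q / 2"
  have nq: "norm q > 0" using q0 by simp
  have T: "0 < T" "T < r" using nq q1 r unfolding T_def by (auto simp: field_simps)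
  have nv: "norm v = 1" using nq unfolding v_def by simp
  have Tv: "T *\<^sub>R v = (r/2) *\<^sub>R q" using nq unfolding T_def v_def by (simp add: field_simps)
  define y where "y = x + T *\<^sub>R v"
  have ge: "T \<le> dist y z" if "z \<in> Z" for z
  proof -
    have "(norm (y - z))\<^sup>2 = (norm (x - z))\<^sup>2 + 2 * inner (x - z) ((r/2) *\<^sub>R q) + (norm ((r/2) *\<^sub>R q))\<^sup>2"
      unfolding y_def Tv[symmetric] using norm_sq_add[of "x - z" "T *\<^sub>R v"] by (simp add: algebra_simps)
    also have "\<dots> = (norm (x - z))\<^sup>2 + r * inner q (x - z) + T\<^sup>2"
      using r unfolding T_def by (simp add: inner_commute power_mult_distrib power2_eq_square)
    also have "\<dots> \<ge> T\<^sup>2"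
    proof -
      have "0 \<le> 2 * r * inner q (x - z) + (norm (x - z))\<^sup>2" using ineq that by auto
      moreover have "0 \<le> (norm (x - z))\<^sup>2" by simp
      ultimately show ?thesis by linarith
    qed
    finally have "T\<^sup>2 \<le> (norm (y - z))\<^sup>2" .
    then show ?thesis using T by (simp add: dist_norm abs_le_square_iff[symmetric]  power2_le_iff_abs_le)
  qed
  have infd: "infdist y Z = T"
  proof (rule antisym)
    show "infdist y Z \<le> T" using infdist_le[OF xZ, of y] T nv unfolding y_def by (simp add: dist_norm)
    show "T \<le> infdist y Z" using xZ ge by (intro infdist_geI) auto
  qed
  from pr T infd obtain x' where x'Z: "x' \<in> Z"
    and h1: "infdist (x' + (r / T) *\<^sub>R (y - x')) Z = (r / T) * norm (y - x')"
    and h2: "(r / T) * norm (y - x') = r"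
    unfolding prox_regular_def by auto
  have nu: "norm (y - x') = T" using h2 r T by (simp add: field_simps)
  define e where "e = x' - x"
  define u where "u = y - x'"
  have yx: "y - x = e + u" unfolding e_def u_def by simp
  have "(norm (y - x))\<^sup>2 = T\<^sup>2" using nv T unfolding y_def by simp
  hence eu: "(norm e)\<^sup>2 + 2 * inner e u = 0" using nu unfolding yx norm_sq_add u_def by simp
  have "r \<le> dist (x' + (r / T) *\<^sub>R (y - x')) x" using infdist_le[OF xZ] h1 h2 by metis
  hence "r\<^sup>2 \<le> (norm (e + (r/T) *\<^sub>R u))\<^sup>2" using r
    by (simp add: dist_norm e_def u_def algebra_simps power_mono)
  also have "\<dots> = (norm e)\<^sup>2 + (r/T) * (2 * inner e u) + r\<^sup>2"
    unfolding norm_sq_add using nu T unfolding u_def by (simp add: power_mult_distrib)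
  also have "\<dots> = (norm e)\<^sup>2 * (1 - r / T) + r\<^sup>2"
  proof -
    have h: "2 * inner e u = - (norm e)\<^sup>2" using eu by linarith
    show ?thesis unfolding h by (simp add: algebra_simps)
  qed
  finally have "0 \<le> (norm e)\<^sup>2 * (1 - r / T)" by simp
  moreover have "1 - r / T < 0" using T by (simp add: field_simps)
  ultimately have "(norm e)\<^sup>2 \<le> 0"
    by (auto simp: zero_le_mult_iff)
  hence "e = 0" by simp
  hence x'x: "x' = x" unfolding e_def by simp
  have w: "x' + (r / T) *\<^sub>R (y - x') = x + r *\<^sub>R v" using x'x T unfolding y_def by simp
  have "\<forall>z\<in>Z. inner v (x - z) + (1 / (2 * r)) * (norm (x - z))\<^sup>2 \<ge> 0"
  proof
    fix z assume zZ: "z \<in> Z"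
    have "r \<le> dist (x + r *\<^sub>R v) z" using infdist_le[OF zZ] h1 h2 w by metis
    hence "r\<^sup>2 \<le> (norm ((x - z) + r *\<^sub>R v))\<^sup>2" using r
      by (simp add: dist_norm algebra_simps power_mono)
    also have "\<dots> = (norm (x - z))\<^sup>2 + 2 * r * inner v (x - z) + r\<^sup>2"
      unfolding norm_sq_add using nv r by (simp add: inner_commute)
    finally have "0 \<le> (norm (x - z))\<^sup>2 + 2 * r * inner v (x - z)" by simp
    hence "0 \<le> ((norm (x - z))\<^sup>2 + 2 * r * inner v (x - z)) / (2 * r)" using r by simp
    thus "inner v (x - z) + (1 / (2 * r)) * (norm (x - z))\<^sup>2 \<ge> 0" using r
      by (simp add: field_simps)
  qed
  thus ?thesis using nv by blast
qed

lemma approx: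
  fixes Z :: "'a::real_inner set"
  assumes r: "r > 0" and pr: "prox_regular r Z" and x: "x \<in> frontier Z" and \<delta>: "\<delta> > 0"
  shows "\<exists>x'\<in>Z. \<exists>\<xi>. norm \<xi> = 1 \<and> norm (x' - x) \<le> \<delta> \<and>
           (\<forall>z\<in>Z. 2 * r * inner \<xi> (x' - z) + (norm (x' - z))\<^sup>2 \<ge> 0)"
proof -
  have cl: "closed Z" using pr unfolding prox_regular_def by simp
  have xZ: "x \<in> Z" using x cl by (simp add: frontier_def closure_closed)
  have xi: "x \<notin> interior Z" using x by (simp add: frontier_def)
  define e where "e = min (\<delta>/2) r"
  have e: "e > 0" using r \<delta> unfolding e_def by simp
  obtain y where y: "dist x y < e" "y \<notin> Z"
    using xi e unfolding mem_interior by (auto simp: subset_eq)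
  define d where "d = infdist y Z"
  have d0: "0 < d" unfolding d_def using infdist_pos_not_in_closed[OF cl _ y(2)] xZ by auto
  have dle: "d \<le> dist y x" unfolding d_def by (rule infdist_le[OF xZ])
  have dr: "d < r" using dle y(1) unfolding e_def by (simp add: dist_commute)
  from pr d0 dr obtain x' where x'Z: "x' \<in> Z"
    and h1: "infdist (x' + (r / d) *\<^sub>R (y - x')) Z = (r / d) * norm (y - x')"
    and h2: "(r / d) * norm (y - x') = r"
    unfolding prox_regular_def d_def by auto
  have nu: "norm (y - x') = d" using h2 r d0 by (simp add: field_simps)
  define \<xi> where "\<xi> = (1 / d) *\<^sub>R (y - x')"
  have n\<xi>: "norm \<xi> = 1" using nu d0 unfolding \<xi>_def by simp
  have w: "x' + (r / d) *\<^sub>R (y - x') = x' + r *\<^sub>R \<xi>" unfolding \<xi>_def by simp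
  have "norm (x' - x) \<le> norm (x' - y) + norm (y - x)" by (rule norm_diff_triangle_le) auto
  also have "\<dots> \<le> \<delta>" using nu dle y(1) unfolding e_def
    by (simp add: dist_norm norm_minus_commute)
  finally have nx: "norm (x' - x) \<le> \<delta>" .
  have "\<forall>z\<in>Z. 2 * r * inner \<xi> (x' - z) + (norm (x' - z))\<^sup>2 \<ge> 0"
  proof
    fix z assume zZ: "z \<in> Z"
    have "r \<le> dist (x' + r *\<^sub>R \<xi>) z" using infdist_le[OF zZ] h1 h2 w by metis
    hence "r\<^sup>2 \<le> (norm ((x' - z) + r *\<^sub>R \<xi>))\<^sup>2" using r
      by (simp add: dist_norm algebra_simps power_mono)
    also have "\<dots> = (norm (x' - z))\<^sup>2 + 2 * r * inner \<xi> (x' - z) + r\<^sup>2"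
      unfolding norm_sq_add using n\<xi> r by (simp add: inner_commute)
    finally show "2 * r * inner \<xi> (x' - z) + (norm (x' - z))\<^sup>2 \<ge> 0" by simp
  qed
  thus ?thesis using x'Z n\<xi> nx by blast
qed

lemma parallelo: "(norm (a - b))\<^sup>2 = 2 * (norm a)\<^sup>2 + 2 * (norm (b::'a::real_inner))\<^sup>2
   - 4 * (norm ((1/2) *\<^sub>R a + (1/2) *\<^sub>R b))\<^sup>2"
  by (simp add: power2_norm_eq_inner inner_add_left inner_add_right inner_diff_left
      inner_diff_right inner_commute algebra_simps)

lemma nested_convex:
  fixes K :: "nat \<Rightarrow> 'a::{real_inner,complete_space} set"
  assumes ne: "\<And>n. K n \<noteq> {}" and cv: "\<And>n. convex (K n)"
    and mono: "\<And>n k. n \<le> k \<Longrightarrow> K k \<subseteq> K n"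
    and bd: "\<And>n \<xi>. \<xi> \<in> K n \<Longrightarrow> norm \<xi> \<le> 1"
  shows "\<exists>s q. s \<longlonglongrightarrow> q \<and> (\<forall>n k. n \<le> k \<longrightarrow> s k \<in> K n)"
proof -
  define f where "f = (\<lambda>\<xi>::'a. (norm \<xi>)\<^sup>2)"
  define m where "m n = Inf (f ` K n)" for n
  have bdd: "bdd_below (f ` K n)" for n unfolding f_def by (auto intro: bdd_belowI[of _ 0])
  have mle: "m n \<le> f \<xi>" if "\<xi> \<in> K n" for n \<xi>
    unfolding m_def using bdd that by (simp add: cInf_lower)
  have mmono: "m n \<le> m k" if "n \<le> k" for n k
    unfolding m_def using ne bdd mono[OF that] by (intro cInf_superset_mono) (auto intro: image_mono)
  have m1: "m n \<le> 1" for n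
  proof -
    obtain \<xi> where "\<xi> \<in> K n" using ne by blast
    hence "m n \<le> f \<xi>" "norm \<xi> \<le> 1" using mle bd by auto
    moreover have "f \<xi> \<le> 1" using \<open>norm \<xi> \<le> 1\<close> unfolding f_def
      by (simp add: power_le_one)
    ultimately show ?thesis by simp
  qed
  have ex: "\<exists>\<xi>\<in>K n. f \<xi> < m n + 1 / Suc n" for n
  proof -
    have "Inf (f ` K n) < m n + 1 / Suc n" unfolding m_def by simp
    moreover have ne': "f ` K n \<noteq> {}" using ne by simp
    ultimately obtain t where t: "t \<in> f ` K n" "t < m n + 1 / Suc n" using cInf_lessD[of "f ` K n"] by meson
    from t(1) obtain \<xi> where "\<xi> \<in> K n" "t = f \<xi>" by (rule imageE) simp
    thus ?thesis using t(2) by blast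
  qed
  define s where "s n = (SOME \<xi>. \<xi> \<in> K n \<and> f \<xi> < m n + 1 / Suc n)" for n
  have s0: "s n \<in> K n \<and> f (s n) < m n + 1 / Suc n" for n
  proof -
    have "\<exists>\<xi>. \<xi> \<in> K n \<and> f \<xi> < m n + 1 / Suc n" using ex[of n] unfolding Bex_def .
    thus ?thesis unfolding s_def by (rule someI_ex)
  qed
  have s: "\<And>n. s n \<in> K n" "\<And>n. f (s n) < m n + 1 / Suc n" using s0 by simp_all
  have inc: "incseq m" using mmono by (simp add: incseq_def)
  obtain L where L: "m \<longlonglongrightarrow> L" "\<forall>i. m i \<le> L" using incseq_convergent[OF inc, of 1] m1 by blast
  define b where "b n = 2 * (L - m n) + 4 / Suc n" for n
  have bound: "(norm (s n - s k))\<^sup>2 \<le> b n" if "n \<le> k" for n k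
  proof -
    have sk: "s k \<in> K n" using s(1) mono[OF that] by blast
    have "(1/2) *\<^sub>R s n + (1/2) *\<^sub>R s k \<in> K n" using convexD[OF cv s(1) sk] by simp
    hence mid: "m n \<le> f ((1/2) *\<^sub>R s n + (1/2) *\<^sub>R s k)" by (rule mle)
    have "1 / real (Suc k) \<le> 1 / Suc n" using that by (simp add: frac_le)
    hence a2: "f (s k) < L + 1 / Suc n" using s(2)[of k] L(2) by (smt (verit))
    have a1: "f (s n) < m n + 1 / Suc n" by (rule s(2))
    have "4 / real (Suc n) = 4 * (1 / real (Suc n))" by simp
    thus ?thesis using parallelo[of "s n" "s k"] mid a1 a2 unfolding f_def b_def by (smt (verit))
  qed
  have bdec: "b k \<le> b n" if "n \<le> k" for n k
  proof -
    have "4 / real (Suc k) \<le> 4 / Suc n" using that by (simp add: frac_le)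
    thus ?thesis unfolding b_def using mmono[OF that] by simp
  qed
  have b0: "b \<longlonglongrightarrow> 0"
  proof -
    have "(\<lambda>n. 2 * (L - m n)) \<longlonglongrightarrow> 2 * (L - L)" using L(1) by (intro tendsto_intros)
    moreover have "(\<lambda>n. 4 / real (Suc n)) \<longlonglongrightarrow> 0"
      using LIMSEQ_Suc[OF lim_const_over_n[of "4::real"]] by simp
    ultimately have "(\<lambda>n. 2 * (L - m n) + 4 / real (Suc n)) \<longlonglongrightarrow> 2 * (L - L) + 0"
      by (intro tendsto_add)
    thus ?thesis unfolding b_def by simp
  qed
  have "Cauchy s"
  proof (rule CauchyI)
    fix e :: real assume e: "0 < e"
    hence "e\<^sup>2 > 0" by simp
    then obtain M where M: "b M < e\<^sup>2"
    proof -
      have "\<exists>M. \<forall>n\<ge>M. dist (b n) 0 < e\<^sup>2" using b0 \<open>e\<^sup>2 > 0\<close> unfolding lim_sequentially by blast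
      then obtain M where "\<forall>n\<ge>M. dist (b n) 0 < e\<^sup>2" by blast
      hence "b M < e\<^sup>2" by (auto simp: dist_real_def)
      thus ?thesis using that by blast
    qed
    show "\<exists>M. \<forall>m\<ge>M. \<forall>n\<ge>M. norm (s m - s n) < e"
    proof (intro exI allI impI)
      fix i j assume ij: "M \<le> i" "M \<le> j"
      have "(norm (s i - s j))\<^sup>2 < e\<^sup>2"
      proof (cases "i \<le> j")
        case True
        then show ?thesis using bound[OF True] bdec[OF ij(1)] M by simp
      next
        case False
        then have ji: "j \<le> i" by simp
        show ?thesis using bound[OF ji] bdec[OF ij(2)] M by (simp add: norm_minus_commute)
      qed
      thus "norm (s i - s j) < e" using e by (simp add: power_less_imp_less_base)
    qed
  qed
  then obtain q where "s \<longlonglongrightarrow> q" using Cauchy_convergent_iff convergent_def by blast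
  moreover have "\<forall>n k. n \<le> k \<longrightarrow> s k \<in> K n" using s(1) mono by blast
  ultimately show ?thesis by blast
qed

lemma conv_le: fixes a b L X Y :: real
  assumes "0 \<le> a" "0 \<le> b" "a + b = 1" "L \<le> X" "L \<le> Y"
  shows "L \<le> a * X + b * Y"
proof -
  have "a * L \<le> a * X" using assms by (intro mult_left_mono)
  moreover have "b * L \<le> b * Y" using assms by (intro mult_left_mono)
  moreover have "a * L + b * L = L" using assms(3) by (metis distrib_right mult_1)
  ultimately show ?thesis by linarith
qed

theorem lemma1p5:
  fixes Z :: "'a::{real_inner, complete_space} set" and r R \<rho> :: real
  assumes "r > 0"
    and "prox_regular r Z"
    and "R \<ge> 3"
    and "\<rho> > 0" and "\<rho> < 2 * r / (1 + R\<^sup>2)"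
    and "\<forall>x\<in>Z. \<exists>xb\<in>Z. norm (x - xb) < R * \<rho> \<and> cball xb (3 * \<rho>) \<subseteq> Z"
  shows "\<forall>x\<in>frontier Z. \<exists>\<xi>. norm \<xi> = 1 \<and>
           (\<forall>z\<in>Z. inner \<xi> (x - z) + (1 / (2 * r)) * (norm (x - z))\<^sup>2 \<ge> 0)"
proof
  fix x assume xf: "x \<in> frontier Z"
  note r = assms(1) and pr = assms(2)
  have cl: "closed Z" using pr unfolding prox_regular_def by simp
  have xZ: "x \<in> Z" using xf cl by (simp add: frontier_def closure_closed)
  obtain xb where xb: "xb \<in> Z" "norm (x - xb) < R * \<rho>" "cball xb (3 * \<rho>) \<subseteq> Z"
    using assms(6) xZ by blast
  define D where "D = norm (x - xb)"
  define P where "P = 6 * r * \<rho> - R\<^sup>2 * \<rho>\<^sup>2 - 9 * \<rho>\<^sup>2"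
  define c0 where "c0 = P / (2 * r)"
  have R2: "R\<^sup>2 \<ge> 9" using power_mono[OF assms(3), of 2] by simp
  have rho1: "\<rho> * (1 + R\<^sup>2) < 2 * r" using assms(5) by (simp add: field_simps add_pos_nonneg)
  have r6: "6 * \<rho> < 2 * r"
  proof -
    have "\<rho> * 10 \<le> \<rho> * (1 + R\<^sup>2)" using R2 assms(4) by (intro mult_left_mono) auto
    thus ?thesis using rho1 assms(4) by linarith
  qed
  have P0: "P > 0"
  proof -
    have "\<rho> * (R\<^sup>2 + 9) \<le> 3 * (\<rho> * (1 + R\<^sup>2))" using R2 assms(4) by (simp add: algebra_simps)
    hence "\<rho> * (R\<^sup>2 + 9) < 6 * r" using rho1 by linarith
    hence "0 < \<rho> * (6 * r - \<rho> * (R\<^sup>2 + 9))" using assms(4) by simp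
    thus ?thesis unfolding P_def by (simp add: algebra_simps power2_eq_square)
  qed
  have c0: "c0 > 0" unfolding c0_def using P0 r by simp
  have DR: "D < R * \<rho>" unfolding D_def by (rule xb(2))
  define K where "K n = {\<xi>::'a. norm \<xi> \<le> 1 \<and> c0 / 2 \<le> inner \<xi> (x - xb) \<and>
      (\<forall>z\<in>Z. - (1 / real (Suc n)) * (1 + norm (x - z)) \<le> 2 * r * inner \<xi> (x - z) + (norm (x - z))\<^sup>2)}" for n
  have Kne: "K n \<noteq> {}" for n
  proof -
    define \<epsilon> where "\<epsilon> = 1 / real (Suc n)"
    have \<epsilon>: "\<epsilon> > 0" unfolding \<epsilon>_def by simp
    define \<delta> where "\<delta> = min (min 1 (\<epsilon> / (2 * (2 * r + 1)))) (min (c0 / 2) (R * \<rho> - D))"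
    have \<delta>0: "\<delta> > 0" unfolding \<delta>_def using \<epsilon> r c0 DR by simp
    obtain x' \<xi> where x'Z: "x' \<in> Z" and n\<xi>: "norm \<xi> = 1" and x'x: "norm (x' - x) \<le> \<delta>"
      and ineq: "\<forall>z\<in>Z. 2 * r * inner \<xi> (x' - z) + (norm (x' - z))\<^sup>2 \<ge> 0"
      using approx[OF r pr xf \<delta>0] by blast
    have ii: "inner \<xi> \<xi> = 1" using n\<xi> by (metis norm_eq_sqrt_inner real_sqrt_eq_1_iff)
    have cs: "\<bar>inner \<xi> v\<bar> \<le> norm v" for v using Cauchy_Schwarz_ineq2[of \<xi> v] n\<xi> by simp
    have cpart: "c0 / 2 \<le> inner \<xi> (x - xb)"
    proof -
      define e where "e = x' - xb"
      define a where "a = inner \<xi> e"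
      have ne: "norm e \<le> R * \<rho>"
      proof -
        have "norm e \<le> norm (x' - x) + norm (x - xb)" unfolding e_def
          by (rule norm_diff_triangle_le) auto
        thus ?thesis using x'x unfolding \<delta>_def D_def by linarith
      qed
      have ne2: "(norm e)\<^sup>2 \<le> R\<^sup>2 * \<rho>\<^sup>2"
        using power_mono[OF ne] by (simp add: power_mult_distrib)
      define z where "z = xb + (3 * \<rho>) *\<^sub>R \<xi>"
      have "z \<in> cball xb (3 * \<rho>)" unfolding z_def using n\<xi> assms(4) by (simp add: dist_norm)
      hence zZ: "z \<in> Z" using xb(3) by blast
      have xz: "x' - z = e + (- (3 * \<rho>)) *\<^sub>R \<xi>" unfolding z_def e_def by (simp add: algebra_simps)
      have "0 \<le> 2 * r * inner \<xi> (x' - z) + (norm (x' - z))\<^sup>2" using ineq zZ by blast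
      also have "\<dots> = 2 * r * (a - 3 * \<rho>) + (norm e)\<^sup>2 - 6 * \<rho> * a + 9 * \<rho>\<^sup>2"
        unfolding xz norm_sq_add a_def using n\<xi> ii
        by (simp add: inner_add_right inner_commute power_mult_distrib algebra_simps)
      finally have "P \<le> a * (2 * r - 6 * \<rho>)" using ne2 unfolding P_def by (simp add: algebra_simps)
      hence apos: "a > 0" using P0 r6 by (smt (verit) mult_nonpos_nonneg)
      have "a * (2 * r - 6 * \<rho>) \<le> a * (2 * r)" using apos assms(4) by simp
      hence "P \<le> a * (2 * r)" using \<open>P \<le> a * (2 * r - 6 * \<rho>)\<close> by linarith
      hence ac: "c0 \<le> a" unfolding c0_def using r by (simp add: field_simps)
      have "inner \<xi> (x - xb) = a + inner \<xi> (x - x')" unfolding a_def e_def by (simp add: inner_diff_right)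
      moreover have "inner \<xi> (x - x') \<ge> - \<delta>" using cs[of "x - x'"] x'x by (simp add: norm_minus_commute)
      moreover have "\<delta> \<le> c0 / 2" unfolding \<delta>_def by (meson min.cobounded1 min.cobounded2 order_trans)
      ultimately show ?thesis using ac by linarith
    qed
    have zpart: "- (1 / real (Suc n)) * (1 + norm (x - z)) \<le> 2 * r * inner \<xi> (x - z) + (norm (x - z))\<^sup>2"
      if zZ: "z \<in> Z" for z
    proof -
      define t where "t = norm (x - z)"
      have d1: "\<delta> \<le> 1" and d2: "\<delta> \<le> \<epsilon> / (2 * (2 * r + 1))" unfolding \<delta>_def by (meson min.cobounded1 min.cobounded2 order_trans)+
      have "inner \<xi> (x - z) = inner \<xi> (x' - z) + inner \<xi> (x - x')" by (simp add: inner_diff_right)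
      moreover have "inner \<xi> (x - x') \<ge> - \<delta>" using cs[of "x - x'"] x'x by (simp add: norm_minus_commute)
      ultimately have i1: "inner \<xi> (x - z) \<ge> inner \<xi> (x' - z) - \<delta>" by linarith
      have "norm (x' - z) \<le> norm (x' - x) + norm (x - z)" by (rule norm_diff_triangle_le) auto
      hence "norm (x' - z) \<le> t + \<delta>" using x'x unfolding t_def by linarith
      hence "(norm (x' - z))\<^sup>2 \<le> (t + \<delta>)\<^sup>2" by (simp add: power_mono)
      hence i2: "(norm (x' - z))\<^sup>2 \<le> t\<^sup>2 + 2 * \<delta> * t + \<delta>\<^sup>2" by (simp add: power2_sum algebra_simps)
      have i0: "0 \<le> 2 * r * inner \<xi> (x' - z) + (norm (x' - z))\<^sup>2" using ineq zZ by blast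
      have "2 * r * inner \<xi> (x' - z) - 2 * r * \<delta> \<le> 2 * r * inner \<xi> (x - z)"
        using i1 r by (simp add: right_diff_distrib[symmetric])
      hence main: "- 2 * r * \<delta> - 2 * \<delta> * t - \<delta>\<^sup>2 \<le> 2 * r * inner \<xi> (x - z) + t\<^sup>2"
        using i0 i2 by linarith
      have "\<delta>\<^sup>2 \<le> \<delta>" using d1 \<delta>0 by (simp add: power2_eq_square mult_left_le)
      hence "2 * r * \<delta> + \<delta>\<^sup>2 \<le> (2 * r + 1) * \<delta>" by (simp add: algebra_simps)
      also have "\<dots> \<le> (2 * r + 1) * (\<epsilon> / (2 * (2 * r + 1)))" using d2 r by (intro mult_left_mono) auto
      also have "\<dots> = \<epsilon> / 2" using r by (simp add: field_simps)
      finally have j1: "2 * r * \<delta> + \<delta>\<^sup>2 \<le> \<epsilon> / 2" .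
      have "\<delta> \<le> \<epsilon> / 2"
      proof -
        have "\<epsilon> / (2 * (2 * r + 1)) \<le> \<epsilon> / 2" using \<epsilon> r by (intro divide_left_mono) auto
        thus ?thesis using d2 by linarith
      qed
      hence "2 * \<delta> * t \<le> \<epsilon> * t" using t_def by (simp add: mult_right_mono)
      hence "- \<epsilon> * (1 + t) \<le> - 2 * r * \<delta> - 2 * \<delta> * t - \<delta>\<^sup>2" using j1 \<epsilon> by (simp add: algebra_simps)
      thus ?thesis using main unfolding t_def \<epsilon>_def by linarith
    qed
    have "\<xi> \<in> K n" unfolding K_def using n\<xi> cpart zpart by simp
    thus ?thesis by blast
  qed
  have Kcv: "convex (K n)" for n
  proof (rule convexI)
    fix u v a b assume u: "u \<in> K n" and v: "v \<in> K n" and a0: "0 \<le> (a::real)" and b0: "0 \<le> b" and ab1: "a + b = 1"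
    have ab: "0 \<le> (a::real) \<and> 0 \<le> b \<and> a + b = 1" using a0 b0 ab1 by simp
    have w1: "norm (a *\<^sub>R u + b *\<^sub>R v) \<le> 1"
    proof -
      have "norm (a *\<^sub>R u + b *\<^sub>R v) \<le> a * norm u + b * norm v"
        using ab norm_triangle_ineq[of "a *\<^sub>R u" "b *\<^sub>R v"] by simp
      also have "\<dots> \<le> 1"
      proof -
        have "norm u \<le> 1" "norm v \<le> 1" using u v unfolding K_def by auto
        hence "a * norm u \<le> a * 1" "b * norm v \<le> b * 1" using ab by (metis mult_left_mono)+
        thus ?thesis using ab by linarith
      qed
      finally show ?thesis .
    qed
    have w2: "c0 / 2 \<le> inner (a *\<^sub>R u + b *\<^sub>R v) (x - xb)"
      using conv_le[of a b "c0/2" "inner u (x - xb)" "inner v (x - xb)"] ab u v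
      unfolding K_def by (simp add: inner_add_left)
    have w3: "- (1 / real (Suc n)) * (1 + norm (x - z)) \<le>
        2 * r * inner (a *\<^sub>R u + b *\<^sub>R v) (x - z) + (norm (x - z))\<^sup>2" if zZ: "z \<in> Z" for z
    proof -
      have "2 * r * inner (a *\<^sub>R u + b *\<^sub>R v) (x - z) + (norm (x - z))\<^sup>2
          = a * (2 * r * inner u (x - z) + (norm (x - z))\<^sup>2) + b * (2 * r * inner v (x - z) + (norm (x - z))\<^sup>2)"
      proof -
        have bb: "b = 1 - a" using ab by simp
        show ?thesis unfolding bb by (simp add: inner_add_left algebra_simps)
      qed
      thus ?thesis using conv_le ab u v zZ unfolding K_def by simp
    qed
    show "a *\<^sub>R u + b *\<^sub>R v \<in> K n" unfolding K_def using w1 w2 w3 by simp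
  qed
  have Kmono: "K k \<subseteq> K n" if "n \<le> k" for n k
  proof
    fix \<xi> assume \<xi>: "\<xi> \<in> K k"
    have "1 / real (Suc k) \<le> 1 / real (Suc n)" using that by (simp add: frac_le)
    hence le: "- (1 / real (Suc n)) * (1 + norm (x - z)) \<le> - (1 / real (Suc k)) * (1 + norm (x - z))" for z
      by (intro mult_right_mono) auto
    have \<xi>k: "norm \<xi> \<le> 1" "c0 / 2 \<le> inner \<xi> (x - xb)"
      "\<forall>z\<in>Z. - (1 / real (Suc k)) * (1 + norm (x - z)) \<le> 2 * r * inner \<xi> (x - z) + (norm (x - z))\<^sup>2"
      using \<xi> unfolding K_def by auto
    have "\<forall>z\<in>Z. - (1 / real (Suc n)) * (1 + norm (x - z)) \<le> 2 * r * inner \<xi> (x - z) + (norm (x - z))\<^sup>2"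
      using \<xi>k(3) le by (meson order_trans)
    thus "\<xi> \<in> K n" using \<xi>k(1,2) unfolding K_def by blast
  qed
  have Kbd: "norm \<xi> \<le> 1" if "\<xi> \<in> K n" for n \<xi> using that unfolding K_def by simp
  have "\<exists>s q. s \<longlonglongrightarrow> q \<and> (\<forall>n k. n \<le> k \<longrightarrow> s k \<in> K n)"
    apply (rule nested_convex)
       apply (rule Kne)
      apply (rule Kcv)
     apply (erule Kmono)
    apply (erule Kbd)
    done
  then obtain s q where sq: "s \<longlonglongrightarrow> q" and sK: "\<forall>n k. n \<le> k \<longrightarrow> s k \<in> K n"
    by blast
  have ev: "eventually (\<lambda>k. s k \<in> K n) sequentially" for n
    using sK unfolding eventually_sequentially by blast
  have q1: "norm q \<le> 1"
    by (rule tendsto_upperbound[OF tendsto_norm[OF sq]]) (use ev[of 0] Kbd in \<open>auto elim: eventually_mono\<close>)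
  have qc: "c0 / 2 \<le> inner q (x - xb)"
    by (rule tendsto_lowerbound[OF tendsto_inner[OF sq tendsto_const]])
      (use ev[of 0] in \<open>auto elim!: eventually_mono simp: K_def\<close>)
  have qz: "0 \<le> 2 * r * inner q (x - z) + (norm (x - z))\<^sup>2" if zZ: "z \<in> Z" for z
  proof -
    have lim: "(\<lambda>k. 2 * r * inner (s k) (x - z) + (norm (x - z))\<^sup>2) \<longlonglongrightarrow> 2 * r * inner q (x - z) + (norm (x - z))\<^sup>2"
      by (intro tendsto_intros sq)
    have bnd: "- (1 / real (Suc n)) * (1 + norm (x - z)) \<le> 2 * r * inner q (x - z) + (norm (x - z))\<^sup>2" for n
      by (rule tendsto_lowerbound[OF lim]) (use ev[of n] zZ in \<open>auto elim!: eventually_mono simp: K_def\<close>)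
    have l0: "(\<lambda>n. - (1 / real (Suc n)) * (1 + norm (x - z))) \<longlonglongrightarrow> - 0 * (1 + norm (x - z))"
      by (intro tendsto_intros LIMSEQ_Suc[OF lim_inverse_n'])
    show ?thesis
      using tendsto_upperbound[OF l0 always_eventually[OF allI[OF bnd]]] by simp
  qed
  have q0: "q \<noteq> 0" using qc c0 by auto
  show "\<exists>\<xi>. norm \<xi> = 1 \<and> (\<forall>z\<in>Z. inner \<xi> (x - z) + (1 / (2 * r)) * (norm (x - z))\<^sup>2 \<ge> 0)"
    using key[OF r pr xZ q0 q1] qz by blast
qed
end
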